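(* Let $v,w,X,Y\in\mathbb{R}^d$ with $\|X\|<\|v\|$ and $\|Y\|<\|w\|$, and define $$h(v,w,X,Y):=-\frac{\|X\|\|Y\|}{\|v\|\|w\|}+\sqrt{1-\frac{\|X\|^2}{\|v\|^2}}\sqrt{1-\frac{\|Y\|^2}{\|w\|^2}}.$$ If $\alpha(v,w)\leq h(v,w,X,Y)$, then $$\alpha(v+X,w+Y)\leq \alpha(v,w)\,h(v,w,X,Y)+\sqrt{1-\alpha(v,w)^2}\sqrt{1-h(v,w,X,Y)^2}.$$
   Context: For nonzero $a,b\in\mathbb{R}^d$, the cosine similarity is $\alpha(a,b)=\frac{\langle a,b\rangle}{\|a\|\|b\|}$. *)

theory Defs
  imports "HOL-Analysis.Analysis"
begin

definition cos_sim :: "real ^ 'd \<Rightarrow> real ^ 'd \<Rightarrow> real" where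
  "cos_sim a b = (a \<bullet> b) / (norm a * norm b)"

definition hfun :: "real ^ 'd \<Rightarrow> real ^ 'd \<Rightarrow> real ^ 'd \<Rightarrow> real ^ 'd \<Rightarrow> real" where
  "hfun v w X Y = - (norm X * norm Y) / (norm v * norm w)
     + sqrt (1 - norm X ^ 2 / norm v ^ 2) * sqrt (1 - norm Y ^ 2 / norm w ^ 2)"

end

theory Submission
  imports Defs
begin

lemma cs_bound:
  fixes a b :: "real ^ 'd"
  shows "-1 \<le> cos_sim a b \<and> cos_sim a b \<le> 1"
proof (cases "a = 0 \<or> b = 0")
  case True then show ?thesis by (auto simp: cos_sim_def)
next
  case False
  then have p: "norm a * norm b > 0" by simp
  have "\<bar>a \<bullet> b\<bar> \<le> norm a * norm b" by (rule Cauchy_Schwarz_ineq2)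
  then show ?thesis using p unfolding cos_sim_def
    by (auto simp: divide_simps abs_le_iff)
qed

lemma cs_comm: "cos_sim a b = cos_sim b a"
  by (simp add: cos_sim_def inner_commute mult.commute)

lemma cs_scale:
  fixes x y :: "real ^ 'd"
  assumes "x \<noteq> 0" "y \<noteq> 0"
  shows "cos_sim x y = (x /\<^sub>R norm x) \<bullet> (y /\<^sub>R norm y)"
  using assms by (simp add: cos_sim_def field_simps)

lemma tri_unit:
  fixes x y z :: "real ^ 'd"
  assumes "norm x = 1" "norm y = 1" "norm z = 1"
  shows "x \<bullet> z \<ge> (x \<bullet> y) * (y \<bullet> z) - sqrt (1 - (x \<bullet> y)^2) * sqrt (1 - (y \<bullet> z)^2)"
proof -
  define xp where "xp = x - (x \<bullet> y) *\<^sub>R y"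
  define zp where "zp = z - (z \<bullet> y) *\<^sub>R y"
  have yy: "y \<bullet> y = 1" using assms(2) by (simp add: dot_square_norm)
  have xx: "x \<bullet> x = 1" using assms(1) by (simp add: dot_square_norm)
  have zz: "z \<bullet> z = 1" using assms(3) by (simp add: dot_square_norm)
  have e1: "xp \<bullet> zp = x \<bullet> z - (x \<bullet> y) * (y \<bullet> z)"
    unfolding xp_def zp_def by (simp add: inner_diff_left inner_diff_right yy inner_commute algebra_simps)
  have e2: "norm xp = sqrt (1 - (x \<bullet> y)^2)"
  proof -
    have "xp \<bullet> xp = 1 - (x \<bullet> y)^2"
      unfolding xp_def by (simp add: inner_diff_left inner_diff_right yy xx inner_commute algebra_simps power2_eq_square)
    then show ?thesis by (simp add: norm_eq_sqrt_inner)
  qed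
  have e3: "norm zp = sqrt (1 - (y \<bullet> z)^2)"
  proof -
    have "zp \<bullet> zp = 1 - (y \<bullet> z)^2"
      unfolding zp_def by (simp add: inner_diff_left inner_diff_right yy zz inner_commute algebra_simps power2_eq_square)
    then show ?thesis by (simp add: norm_eq_sqrt_inner)
  qed
  have "\<bar>xp \<bullet> zp\<bar> \<le> norm xp * norm zp" by (rule Cauchy_Schwarz_ineq2)
  then show ?thesis using e1 e2 e3 by (simp add: abs_le_iff)
qed

lemma tri_cs:
  fixes x y z :: "real ^ 'd"
  assumes "x \<noteq> 0" "y \<noteq> 0" "z \<noteq> 0"
  shows "cos_sim x z \<ge> cos_sim x y * cos_sim y z - sqrt (1 - (cos_sim x y)^2) * sqrt (1 - (cos_sim y z)^2)"
  using tri_unit[of "x /\<^sub>R norm x" "y /\<^sub>R norm y" "z /\<^sub>R norm z"] assms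
  by (simp add: cs_scale)

lemma ang_tri:
  fixes x y z :: "real ^ 'd"
  assumes "x \<noteq> 0" "y \<noteq> 0" "z \<noteq> 0"
  shows "arccos (cos_sim x z) \<le> arccos (cos_sim x y) + arccos (cos_sim y z)"
proof -
  define al where "al = arccos (cos_sim x y)"
  define be where "be = arccos (cos_sim y z)"
  have b1: "-1 \<le> cos_sim x y" "cos_sim x y \<le> 1" using cs_bound by blast+
  have b2: "-1 \<le> cos_sim y z" "cos_sim y z \<le> 1" using cs_bound by blast+
  have b3: "-1 \<le> cos_sim x z" "cos_sim x z \<le> 1" using cs_bound by blast+
  have a0: "0 \<le> al" "0 \<le> be" unfolding al_def be_def using b1 b2 arccos_lbound by auto
  show ?thesis
  proof (cases "al + be \<ge> pi")
    case True
    then show ?thesis using arccos_bounded[OF b3] al_def be_def by linarith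
  next
    case False
    have "cos (al + be) = cos_sim x y * cos_sim y z - sqrt (1 - (cos_sim x y)^2) * sqrt (1 - (cos_sim y z)^2)"
      unfolding al_def be_def cos_add using b1 b2 by (simp add: sin_arccos)
    then have "cos (al + be) \<le> cos_sim x z" using tri_cs[OF assms] by linarith
    then have "arccos (cos_sim x z) \<le> arccos (cos (al + be))"
      using arccos_le_arccos b3 cos_ge_minus_one by blast
    also have "\<dots> = al + be" using a0 False by (simp add: arccos_cos)
    finally show ?thesis unfolding al_def be_def .
  qed
qed

lemma pert:
  fixes v X :: "real ^ 'd"
  assumes "norm X < norm v"
  shows "arccos (cos_sim v (v + X)) \<le> arcsin (norm X / norm v)"
proof -
  define n where "n = norm v"
  define m where "m = norm (v + X)"
  define x where "x = norm X"
  have n0: "n > 0" using assms n_def by (metis norm_ge_zero le_less_trans)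
  have x0: "0 \<le> x" "x < n" using assms x_def n_def by auto
  have m0: "m > 0"
  proof -
    have "norm v \<le> norm (v + X) + norm X" by (metis add_diff_cancel norm_triangle_ineq4)
    then show ?thesis using assms m_def by linarith
  qed
  have vu: "v \<bullet> (v + X) = (n^2 + m^2 - x^2) / 2"
    unfolding n_def m_def x_def
    by (simp add: power2_norm_eq_inner inner_add_left inner_add_right inner_commute field_simps)
  define r where "r = sqrt (n^2 - x^2)"
  have r0: "r \<ge> 0" "r^2 = n^2 - x^2" unfolding r_def using x0 n0 by (auto simp: power_mono)
  have key: "2 * m * r \<le> n^2 + m^2 - x^2"
  proof -
    have "0 \<le> (m - r)^2" by simp
    also have "\<dots> = m^2 - 2 * m * r + r^2" by (simp add: power2_diff)
    finally show ?thesis using r0(2) by linarith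
  qed
  have s2: "sqrt (1 - (x / n)^2) = r / n"
  proof -
    have "1 - (x/n)^2 = (r/n)^2" using r0 n0 by (simp add: power_divide field_simps)
    then show ?thesis using r0 n0 by simp
  qed
  have cs: "cos_sim v (v + X) = (n^2 + m^2 - x^2) / (2 * n * m)"
    unfolding cos_sim_def vu using n_def m_def by simp
  have ge: "r / n \<le> cos_sim v (v + X)"
    unfolding cs using key n0 m0 by (simp add: field_simps)
  have sb: "-1 \<le> x / n" "x / n \<le> 1" using x0 n0 by (auto simp: divide_simps)
  have c3: "cos_sim v (v + X) \<le> 1" using cs_bound by blast
  have "arccos (cos_sim v (v + X)) \<le> arccos (cos (arcsin (x / n)))"
    apply (rule arccos_le_arccos)
    using cos_ge_minus_one apply blast
    using ge s2 cos_arcsin[OF sb] apply simp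
    using c3 by simp
  also have "\<dots> = arcsin (x / n)"
    apply (rule arccos_cos)
    using arcsin_lbound[OF sb] arcsin_ubound[OF sb] x0 n0 arcsin_le_mono[of 0 "x/n"] apply simp
    using arcsin_ubound[OF sb] pi_gt_zero by linarith
  finally show ?thesis unfolding x_def n_def .
qed

theorem lemma2:
  fixes v w X Y :: "real ^ 'd"
  assumes "norm X < norm v" and "norm Y < norm w"
    and "cos_sim v w \<le> hfun v w X Y"
  shows "cos_sim (v + X) (w + Y) \<le>
    cos_sim v w * hfun v w X Y + sqrt (1 - (cos_sim v w)^2) * sqrt (1 - (hfun v w X Y)^2)"
proof -
  define a where "a = arcsin (norm X / norm v)"
  define b where "b = arcsin (norm Y / norm w)"
  define c where "c = cos_sim v w"
  define th where "th = arccos c"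
  define ph where "ph = arccos (cos_sim (v + X) (w + Y))"
  have v0: "v \<noteq> 0" using assms(1) by auto
  have w0: "w \<noteq> 0" using assms(2) by auto
  have vX: "v + X \<noteq> 0"
  proof
    assume "v + X = 0" then have "X = - v" by (simp add: add_eq_0_iff2)
    then show False using assms(1) by simp
  qed
  have wY: "w + Y \<noteq> 0"
  proof
    assume "w + Y = 0" then have "Y = - w" by (simp add: add_eq_0_iff2)
    then show False using assms(2) by simp
  qed
  have sb0: "norm X / norm v \<le> 1" "0 \<le> norm X / norm v"
    using assms(1) v0 by (auto simp: divide_simps)
  have sb: "-1 \<le> norm X / norm v" "norm X / norm v \<le> 1" "0 \<le> norm X / norm v"
    using sb0 by linarith+
  have tb0: "norm Y / norm w \<le> 1" "0 \<le> norm Y / norm w"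
    using assms(2) w0 by (auto simp: divide_simps)
  have tb: "-1 \<le> norm Y / norm w" "norm Y / norm w \<le> 1" "0 \<le> norm Y / norm w"
    using tb0 by linarith+
  have a0: "0 \<le> a" "a \<le> pi/2" unfolding a_def
    using arcsin_ubound[OF sb(1,2)] arcsin_le_mono[of 0 "norm X / norm v"] sb by auto
  have b0: "0 \<le> b" "b \<le> pi/2" unfolding b_def
    using arcsin_ubound[OF tb(1,2)] arcsin_le_mono[of 0 "norm Y / norm w"] tb by auto
  have cb: "-1 \<le> c" "c \<le> 1" unfolding c_def using cs_bound by blast+
  have pb: "-1 \<le> cos_sim (v + X) (w + Y)" "cos_sim (v + X) (w + Y) \<le> 1" using cs_bound by blast+
  have hcos: "hfun v w X Y = cos (a + b)"
    unfolding hfun_def a_def b_def cos_add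
    by (simp add: cos_arcsin[OF sb(1,2)] sin_arcsin[OF sb(1,2)] cos_arcsin[OF tb(1,2)] sin_arcsin[OF tb(1,2)] power_divide)
  have th_ge: "a + b \<le> th"
  proof -
    have "arccos (cos (a + b)) \<le> arccos c"
      apply (rule arccos_le_arccos) using cb apply simp
      using assms(3) hcos c_def apply simp using cos_le_one by blast
    then show ?thesis unfolding th_def using a0 b0 by (simp add: arccos_cos)
  qed
  have t1: "th \<le> arccos (cos_sim v (v + X)) + arccos (cos_sim (v + X) w)"
    unfolding th_def c_def using ang_tri[OF v0 vX w0] .
  have t2: "arccos (cos_sim (v + X) w) \<le> ph + arccos (cos_sim (w + Y) w)"
    unfolding ph_def using ang_tri[OF vX wY w0] .
  have p1: "arccos (cos_sim v (v + X)) \<le> a" unfolding a_def by (rule pert[OF assms(1)])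
  have p2: "arccos (cos_sim (w + Y) w) \<le> b" unfolding b_def cs_comm[of "w + Y"] by (rule pert[OF assms(2)])
  have ph_ge: "th - (a + b) \<le> ph" using t1 t2 p1 p2 by linarith
  have ph_le: "ph \<le> pi" unfolding ph_def using arccos_bounded[OF pb] by simp
  have "cos_sim (v + X) (w + Y) = cos ph" unfolding ph_def using pb by simp
  also have "\<dots> \<le> cos (th - (a + b))"
    by (rule cos_monotone_0_pi_le) (use th_ge ph_ge ph_le in auto)
  also have "\<dots> = c * cos (a + b) + sin th * sin (a + b)"
    unfolding cos_diff th_def using cb by simp
  also have "\<dots> = c * hfun v w X Y + sqrt (1 - c^2) * sqrt (1 - (hfun v w X Y)^2)"
  proof -
    have "sin th = sqrt (1 - c^2)" unfolding th_def using cb by (simp add: sin_arccos)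
    moreover have "sin (a + b) = sqrt (1 - (cos (a + b))^2)"
    proof -
      have "0 \<le> sin (a + b)" apply (rule sin_ge_zero) using a0 b0 by auto
      moreover have "(sin (a + b))^2 = 1 - (cos (a + b))^2" by (simp add: sin_squared_eq)
      ultimately show ?thesis by (metis real_sqrt_unique)
    qed
    ultimately show ?thesis using hcos by simp
  qed
  finally show ?thesis unfolding c_def .
qed

end
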